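(* Let $f:2^V\to\mathbb{Z}_{\ge0}$ be a connectivity function, $W\subseteq V$, and $(C_1,C_2,C_3)$ a minimum $W$-improvement of arity 3. Then for every $i\in\{1,2,3\}$ it holds that $f(W\cup C_i)>f(W)/2$ and $f((V\setminus W)\cup C_i)>f(W)/2$.
   Context: A connectivity function $f:2^V\to\mathbb{Z}_{\ge0}$ ($V$ finite) satisfies $f(\emptyset)=0$, $f(X)=f(V\setminus X)$, and $f(X\cup Y)+f(X\cap Y)\le f(X)+f(Y)$. For $W\subseteq V$, a $W$-improvement is a tripartition $(C_1,C_2,C_3)$ of $V$ (pairwise disjoint, possibly empty, union $V$) with $f(C_i)<f(W)/2$, $f(C_i\cap W)<f(W)$, $f(C_i\cap(V\setminus W))<f(W)$ for each $i$. Its width is $\max_i f(C_i)$, its sum-width is $\sum_i f(C_i)$, and its arity is the number of nonempty $C_i$. A $W$-improvement is minimum if it has minimum width among all $W$-improvements, subject to that minimum arity, and subject to those minimum sum-width. *)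

theory Defs
  imports Complex_Main
begin

definition conn_fun :: "'a set \<Rightarrow> ('a set \<Rightarrow> nat) \<Rightarrow> bool" where
  "conn_fun V f \<longleftrightarrow> finite V \<and> f {} = 0
     \<and> (\<forall>X. X \<subseteq> V \<longrightarrow> f X = f (V - X))
     \<and> (\<forall>X Y. X \<subseteq> V \<longrightarrow> Y \<subseteq> V \<longrightarrow> f (X \<union> Y) + f (X \<inter> Y) \<le> f X + f Y)"

definition tripartition :: "'a set \<Rightarrow> 'a set \<times> 'a set \<times> 'a set \<Rightarrow> bool" where
  "tripartition V C \<longleftrightarrow> (case C of (C1, C2, C3) \<Rightarrow>
     C1 \<inter> C2 = {} \<and> C1 \<inter> C3 = {} \<and> C2 \<inter> C3 = {} \<and> C1 \<union> C2 \<union> C3 = V)"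

definition parts :: "'a set \<times> 'a set \<times> 'a set \<Rightarrow> 'a set list" where
  "parts C = (case C of (C1, C2, C3) \<Rightarrow> [C1, C2, C3])"

definition improvement :: "'a set \<Rightarrow> ('a set \<Rightarrow> nat) \<Rightarrow> 'a set \<Rightarrow> 'a set \<times> 'a set \<times> 'a set \<Rightarrow> bool" where
  "improvement V f W C \<longleftrightarrow> tripartition V C \<and>
     (\<forall>Ci \<in> set (parts C). real (f Ci) < real (f W) / 2 \<and> f (Ci \<inter> W) < f W
        \<and> f (Ci \<inter> (V - W)) < f W)"

definition width :: "('a set \<Rightarrow> nat) \<Rightarrow> 'a set \<times> 'a set \<times> 'a set \<Rightarrow> nat" where
  "width f C = (case C of (C1, C2, C3) \<Rightarrow> max (f C1) (max (f C2) (f C3)))"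

definition sum_width :: "('a set \<Rightarrow> nat) \<Rightarrow> 'a set \<times> 'a set \<times> 'a set \<Rightarrow> nat" where
  "sum_width f C = (case C of (C1, C2, C3) \<Rightarrow> f C1 + f C2 + f C3)"

definition arity :: "'a set \<times> 'a set \<times> 'a set \<Rightarrow> nat" where
  "arity C = length (filter (\<lambda>Ci. Ci \<noteq> {}) (parts C))"

definition min_improvement :: "'a set \<Rightarrow> ('a set \<Rightarrow> nat) \<Rightarrow> 'a set \<Rightarrow> 'a set \<times> 'a set \<times> 'a set \<Rightarrow> bool" where
  "min_improvement V f W C \<longleftrightarrow> improvement V f W C
     \<and> (\<forall>D. improvement V f W D \<longrightarrow> width f C \<le> width f D)
     \<and> (\<forall>D. improvement V f W D \<and> width f D = width f C \<longrightarrow> arity C \<le> arity D)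
     \<and> (\<forall>D. improvement V f W D \<and> width f D = width f C \<and> arity D = arity C
            \<longrightarrow> sum_width f C \<le> sum_width f D)"

end

theory Submission
  imports Defs
begin

lemma cf_sym: "conn_fun V f \<Longrightarrow> X \<subseteq> V \<Longrightarrow> f X = f (V - X)"
  unfolding conn_fun_def by blast

lemma cf_sub: "conn_fun V f \<Longrightarrow> X \<subseteq> V \<Longrightarrow> Y \<subseteq> V \<Longrightarrow> f (X \<union> Y) + f (X \<inter> Y) \<le> f X + f Y"
  unfolding conn_fun_def by blast

lemma cf_V: "conn_fun V f \<Longrightarrow> f V = 0"
proof -
  assume a: "conn_fun V f"
  then have "f V = f (V - V)" using cf_sym by blast
  then show ?thesis using a unfolding conn_fun_def by simp
qed

lemma key:
  assumes cf: "conn_fun V f" and W: "W \<subseteq> V" and C: "C \<subseteq> V"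
    and small: "2 * f C < f W"
    and big: "f (W - C) \<ge> f W \<or> f ((V - W) - C) \<ge> f W"
  shows "2 * f (W \<union> C) > f W \<and> 2 * f ((V - W) \<union> C) > f W"
proof -
  have s1: "f (V - ((V - W) \<union> C)) = f ((V - W) \<union> C)"
    using cf_sym[OF cf, of "(V - W) \<union> C"] C by auto
  have e1: "V - ((V - W) \<union> C) = W - C" using W by blast
  have s2: "f (V - (W \<union> C)) = f (W \<union> C)"
    using cf_sym[OF cf, of "W \<union> C"] C W by auto
  have e2: "V - (W \<union> C) = (V - W) - C" by auto
  have sc: "f (V - C) = f C" using cf_sym[OF cf C] by simp
  have i1: "f (W - C) \<le> f (W \<union> C) + f C"
  proof -
    have "f ((W \<union> C) \<union> (V - C)) + f ((W \<union> C) \<inter> (V - C)) \<le> f (W \<union> C) + f (V - C)"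
      using cf_sub[OF cf, of "W \<union> C" "V - C"] W C by auto
    moreover have "(W \<union> C) \<union> (V - C) = V" using W C by auto
    moreover have "(W \<union> C) \<inter> (V - C) = W - C" using W by blast
    ultimately show ?thesis using cf_V[OF cf] sc by simp
  qed
  have i2: "f ((V - W) - C) \<le> f ((V - W) \<union> C) + f C"
  proof -
    have "f (((V - W) \<union> C) \<union> (V - C)) + f (((V - W) \<union> C) \<inter> (V - C)) \<le> f ((V - W) \<union> C) + f (V - C)"
      using cf_sub[OF cf, of "(V - W) \<union> C" "V - C"] W C by auto
    moreover have "((V - W) \<union> C) \<union> (V - C) = V" using W C by auto
    moreover have "((V - W) \<union> C) \<inter> (V - C) = (V - W) - C" by auto
    ultimately show ?thesis using cf_V[OF cf] sc by simp
  qed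
  show ?thesis using s1 e1 s2 e2 i1 i2 small big by auto
qed

lemma two_impr:
  assumes cf: "conn_fun V f" and W: "W \<subseteq> V" and A: "A \<subseteq> V"
    and h: "2 * f A < f W" "f (A \<inter> W) < f W" "f (A \<inter> (V - W)) < f W"
      "f ((V - A) \<inter> W) < f W" "f ((V - A) \<inter> (V - W)) < f W"
  shows "improvement V f W (A, V - A, {})"
proof -
  have sc: "f (V - A) = f A" using cf_sym[OF cf A] by simp
  have e: "f {} = 0" using cf unfolding conn_fun_def by simp
  show ?thesis unfolding improvement_def tripartition_def parts_def
    using h sc e A by auto
qed

lemma main_i:
  assumes cf: "conn_fun V f" and W: "W \<subseteq> V"
    and mi: "min_improvement V f W C" and ar: "arity C = 3"
    and Ci: "Ci \<in> set (parts C)"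
    and tp: "tripartition V C"
  shows "2 * f (W \<union> Ci) > f W \<and> 2 * f ((V - W) \<union> Ci) > f W"
proof -
  have imp: "improvement V f W C" using mi unfolding min_improvement_def by blast
  have CiV: "Ci \<subseteq> V" using Ci tp unfolding parts_def tripartition_def
    by (cases C) auto
  have fCi: "real (f Ci) < real (f W) / 2" "f (Ci \<inter> W) < f W" "f (Ci \<inter> (V - W)) < f W"
    using imp Ci unfolding improvement_def by auto
  have small: "2 * f Ci < f W" using fCi(1) by linarith
  have wC: "f Ci \<le> width f C" using Ci unfolding parts_def width_def by (cases C) auto
  have big: "f (W - Ci) \<ge> f W \<or> f ((V - W) - Ci) \<ge> f W"
  proof (rule ccontr)
    assume "\<not> ?thesis"
    moreover have "(V - Ci) \<inter> W = W - Ci" using W by blast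
    moreover have "(V - Ci) \<inter> (V - W) = (V - W) - Ci" by blast
    ultimately have n: "f ((V - Ci) \<inter> W) < f W" "f ((V - Ci) \<inter> (V - W)) < f W"
      by simp_all
    have D: "improvement V f W (Ci, V - Ci, {})"
      using two_impr[OF cf W CiV small fCi(2) fCi(3) n] .
    have sc: "f (V - Ci) = f Ci" using cf_sym[OF cf CiV] by simp
    have e: "f {} = 0" using cf unfolding conn_fun_def by simp
    have wD: "width f (Ci, V - Ci, {}) = f Ci" unfolding width_def using sc e by simp
    have "width f C \<le> width f (Ci, V - Ci, {})" using mi D unfolding min_improvement_def by blast
    then have "width f (Ci, V - Ci, {}) = width f C" using wD wC by simp
    then have "arity C \<le> arity (Ci, V - Ci, {})" using mi D unfolding min_improvement_def by blast
    moreover have "arity (Ci, V - Ci, {}) \<le> 2" unfolding arity_def parts_def by auto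
    ultimately show False using ar by simp
  qed
  show ?thesis using key[OF cf W CiV small big] .
qed

theorem lemma8:
  fixes V W :: "'a set" and f :: "'a set \<Rightarrow> nat" and C1 C2 C3 :: "'a set"
  assumes "conn_fun V f"
    and "W \<subseteq> V"
    and "min_improvement V f W (C1, C2, C3)"
    and "arity (C1, C2, C3) = 3"
  shows "\<forall>Ci \<in> {C1, C2, C3}. real (f (W \<union> Ci)) > real (f W) / 2
            \<and> real (f ((V - W) \<union> Ci)) > real (f W) / 2"
proof
  fix Ci assume h: "Ci \<in> {C1, C2, C3}"
  have tp: "tripartition V (C1, C2, C3)"
    using assms(3) unfolding min_improvement_def improvement_def by blast
  have "Ci \<in> set (parts (C1, C2, C3))" using h unfolding parts_def by auto
  from main_i[OF assms(1,2,3,4) this tp]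
  have "2 * f (W \<union> Ci) > f W \<and> 2 * f ((V - W) \<union> Ci) > f W" .
  then show "real (f (W \<union> Ci)) > real (f W) / 2
            \<and> real (f ((V - W) \<union> Ci)) > real (f W) / 2" by linarith
qed

end
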